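(* Let $p\in(0,1)$ and $d\ge2$ an integer. Define the path $$\gamma_1=\Big\{-1+\frac{\sin(\phi(d-1))}{\sin(\phi d)}e^{i\phi}:\ \phi\in[0,\pi/d)\Big\}$$ (the point at $\phi=0$ being $-1/d$, by continuity). Then $v(1+v)^{d-1}\in\mathbb{R}$ for all $v\in\gamma_1$. Moreover, for every $v\in\gamma_1$ and every solution $u$ of $u(1+u)^{d-1}=v(1+v)^{d-1}$ with $u\notin\{v,\bar v\}$, $$\big|u(1/p+u)^{d/p-1}\big|\neq\big|v(1/p+v)^{d/p-1}\big|.$$
   Context: $|z(1/p+z)^{d/p-1}|$ means $|z|\,|1/p+z|^{d/p-1}$. *)

theory Defs
  imports "HOL-Analysis.Analysis"
begin

definition gamma1_pt :: "nat \<Rightarrow> real \<Rightarrow> complex" where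
  "gamma1_pt d \<phi> =
     (if \<phi> = 0 then - 1 / of_nat d
      else - 1 + complex_of_real (sin (\<phi> * (real d - 1)) / sin (\<phi> * real d)) * cis \<phi>)"

definition gamma1 :: "nat \<Rightarrow> complex set" where
  "gamma1 d = gamma1_pt d ` {0..<pi / real d}"

end

theory Submission
  imports Defs "HOL-Real_Asymp.Real_Asymp"
begin

lemma trig_K0:
  fixes n :: nat and t :: real
  assumes n: "n \<ge> 1" and t0: "0 < t" and t1: "t < pi / real (n+1)"
  shows "real n ^ n / real (n+1) ^ (n+1) \<le> sin t * sin (real n * t) ^ n / sin (real (n+1) * t) ^ (n+1)"
proof -
  define k where "k x = real n * ln (sin (real n * x)) + ln (sin x) - real (n+1) * ln (sin (real (n+1) * x))" for x
  have pos: "sin x > 0 \<and> sin (real n * x) > 0 \<and> sin (real (n+1) * x) > 0"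
    if "0 < x" "x < pi / real (n+1)" for x
  proof -
    have "real (n+1) * x < pi" using that by (simp add: field_simps)
    moreover have "real n * x \<le> real (n+1) * x" "x \<le> real (n+1) * x" using that by (auto simp: field_simps)
    ultimately have "real n * x < pi" "x < pi" by linarith+
    moreover have "real n * x > 0" using that n by simp
    ultimately show ?thesis using that \<open>real (n+1) * x < pi\<close> by (auto intro!: sin_gt_zero)
  qed
  have der: "DERIV k x :> real n * (real n * cos (real n * x) / sin (real n * x)) + cos x / sin x
              - real (n+1) * (real (n+1) * cos (real (n+1) * x) / sin (real (n+1) * x))"
    if "0 < x" "x < pi / real (n+1)" for x
    using pos[OF that] unfolding k_def
    by (auto intro!: derivative_eq_intros simp: field_simps)
  have Dpos: "real n * (real n * cos (real n * x) / sin (real n * x)) + cos x / sin x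
              - real (n+1) * (real (n+1) * cos (real (n+1) * x) / sin (real (n+1) * x)) > 0"
    if "0 < x" "x < pi / real (n+1)" for x
  proof -
    define sa ca sb cb where "sa = sin (real n * x)" "ca = cos (real n * x)" "sb = sin x" "cb = cos x"
    have e: "real (n+1) * x = real n * x + x" by (simp add: field_simps)
    have sd: "sin (real (n+1) * x) = sa * cb + ca * sb" unfolding e sa_ca_sb_cb_def by (simp add: sin_add)
    have cd: "cos (real (n+1) * x) = ca * cb - sa * sb" unfolding e sa_ca_sb_cb_def by (simp add: cos_add)
    have p: "sa > 0" "sb > 0" "sa * cb + ca * sb > 0" using pos[OF that] sd sa_ca_sb_cb_def by auto
    have "(real n * ca * sb - cb * sa)^2 + (real n + 1)^2 * sa^2 * sb^2 > 0"
      using p by (intro add_nonneg_pos) auto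
    also have "(real n * ca * sb - cb * sa)^2 + (real n + 1)^2 * sa^2 * sb^2
       = (real n * (real n * ca / sa) + cb / sb - real (n+1) * (real (n+1) * (ca * cb - sa * sb) / (sa * cb + ca * sb)))
         * (sa * sb * (sa * cb + ca * sb))"
    proof -
      have "(real n * (real n * ca / sa) + cb / sb - real (n+1) * (real (n+1) * (ca * cb - sa * sb) / (sa * cb + ca * sb)))
         * (sa * sb * (sa * cb + ca * sb)) = real n * real n * ca * sb * (sa * cb + ca * sb) + cb * sa * (sa * cb + ca * sb)
           - real (n+1) * real (n+1) * (ca * cb - sa * sb) * sa * sb"
      proof -
        have sd0: "sa * cb + ca * sb \<noteq> 0" using p by simp
        have "real n * (real n * ca / sa) * (sa * sb * (sa * cb + ca * sb)) = real n * real n * ca * sb * (sa * cb + ca * sb)"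
          using p by simp
        moreover have "cb / sb * (sa * sb * (sa * cb + ca * sb)) = cb * sa * (sa * cb + ca * sb)"
          using p by simp
        moreover have "real (n+1) * (real (n+1) * (ca * cb - sa * sb) / (sa * cb + ca * sb)) * (sa * sb * (sa * cb + ca * sb))
           = real (n+1) * real (n+1) * (ca * cb - sa * sb) * sa * sb"
          using sd0 by simp
        ultimately show ?thesis by (simp only: left_diff_distrib distrib_right)
      qed
      thus ?thesis by (simp add: algebra_simps power2_eq_square)
    qed
    finally have "0 < (real n * (real n * ca / sa) + cb / sb - real (n+1) * (real (n+1) * (ca * cb - sa * sb) / (sa * cb + ca * sb)))
         * (sa * sb * (sa * cb + ca * sb))" .
    hence "0 < real n * (real n * ca / sa) + cb / sb - real (n+1) * (real (n+1) * (ca * cb - sa * sb) / (sa * cb + ca * sb))"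
      using p zero_less_mult_pos2 by (metis mult_pos_pos)
    thus ?thesis using sd cd sa_ca_sb_cb_def by simp
  qed
  have mono: "k x \<le> k t" if "0 < x" "x < t" for x
  proof -
    have "k x < k t"
      apply (rule DERIV_pos_imp_increasing[OF that(2)])
      using der Dpos that t1 by (meson less_le_trans le_less_trans)
    thus ?thesis by simp
  qed
  have lim: "(k \<longlongrightarrow> real n * ln (real n) - real (n+1) * ln (real (n+1))) (at_right 0)"
  proof -
    have "real n > 0" using n by simp
    hence "((\<lambda>x. real n * ln (sin (real n * x)) + ln (sin x) - (real n + 1) * ln (sin ((real n + 1) * x)))
       \<longlongrightarrow> real n * ln (real n) - (real n + 1) * ln (real n + 1)) (at_right 0)"
      by real_asymp
    thus ?thesis unfolding k_def by (simp add: add.commute)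
  qed
  have L: "real n * ln (real n) - real (n+1) * ln (real (n+1)) \<le> k t"
    apply (rule tendsto_upperbound[OF lim])
     apply (simp add: eventually_at_right_field)
    using t0 mono by (auto intro!: exI[of _ t])
  have "exp (real n * ln (real n) - real (n+1) * ln (real (n+1))) \<le> exp (k t)"
    using L by simp
  moreover have "exp (real n * ln (real n) - real (n+1) * ln (real (n+1))) = real n ^ n / real (n+1) ^ (n+1)"
    using n by (simp add: exp_diff ln_realpow[symmetric] del: of_nat_Suc)
  moreover have "exp (k t) = sin t * sin (real n * t) ^ n / sin (real (n+1) * t) ^ (n+1)"
    using pos[OF t0 t1] unfolding k_def
    by (simp add: exp_diff exp_add ln_realpow[symmetric] del: of_nat_Suc)
  ultimately show ?thesis by simp
qed

lemma gamma_facts: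
  fixes n :: nat and v :: complex
  assumes n: "n \<ge> 1" and v: "v \<in> gamma1 (n+1)"
  shows "v * (1+v)^n \<in> \<real> \<and> Im v \<ge> 0 \<and> (Im v = 0 \<longrightarrow> v = - 1 / of_nat (n+1))
    \<and> real n ^ n / real (n+1)^(n+1) \<le> cmod v * cmod (1+v)^n"
proof -
  obtain t where t: "0 \<le> t" "t < pi / real (n+1)" and vt: "v = gamma1_pt (n+1) t"
    using v unfolding gamma1_def by auto
  show ?thesis
  proof (cases "t = 0")
    case True
    have v0: "v = complex_of_real (- 1 / real (n+1))" using True vt unfolding gamma1_pt_def by simp
    have c1: "cmod v = 1 / real (n+1)" using v0 by (simp add: norm_divide del: of_nat_Suc)
    have "1 + v = complex_of_real (1 + (- 1 / real (n+1)))" unfolding v0 by simp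
    also have "1 + (- 1 / real (n+1)) = real n / real (n+1)" by (simp add: field_simps)
    finally have "1 + v = complex_of_real (real n / real (n+1))" .
    hence c2: "cmod (1+v) = real n / real (n+1)" by (simp add: norm_divide del: of_nat_Suc)
    have "cmod v * cmod (1+v)^n = real n ^ n / real (n+1)^(n+1)"
      unfolding c1 c2 by (simp add: power_divide del: of_nat_Suc)
    moreover have "v * (1+v)^n \<in> \<real>" using v0 by simp
    ultimately show ?thesis using v0 by simp
  next
    case False
    hence t0: "0 < t" using t by simp
    define sa ca sb cb sd where "sa = sin (real n * t)" "ca = cos (real n * t)" "sb = sin t" "cb = cos t"
       "sd = sin (real (n+1) * t)"
    have e: "real (n+1) * t = real n * t + t" by (simp add: field_simps)
    have sdeq: "sd = sa * cb + ca * sb" unfolding sa_ca_sb_cb_sd_def e by (simp add: sin_add)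
    have "real (n+1) * t < pi" using t by (simp add: field_simps)
    moreover have "real n * t \<le> real (n+1) * t" "t \<le> real (n+1) * t" using t0 by (auto simp: field_simps)
    ultimately have "real n * t < pi" "t < pi" by linarith+
    moreover have "real n * t > 0" using t0 n by simp
    ultimately have pos: "sa > 0" "sb > 0" "sd > 0" using t0 \<open>real (n+1) * t < pi\<close>
      unfolding sa_ca_sb_cb_sd_def by (auto intro!: sin_gt_zero)
    define R where "R = sa / sd"
    have R0: "R > 0" using pos R_def by simp
    have vR: "v = - 1 + complex_of_real R * cis t"
      using vt t0 unfolding gamma1_pt_def R_def sa_ca_sb_cb_sd_def by (simp add: mult.commute)
    have w: "1 + v = complex_of_real R * cis t" using vR by simp
    have pw: "(1+v)^n = complex_of_real (R^n) * cis (real n * t)" unfolding w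
      by (simp add: power_mult_distrib Complex.DeMoivre)
    have "v * (1+v)^n = (complex_of_real R * cis t - 1) * (complex_of_real (R^n) * cis (real n * t))"
      using vR pw by simp
    also have "... = complex_of_real R * complex_of_real (R^n) * (cis t * cis (real n * t)) - complex_of_real (R^n) * cis (real n * t)"
      by (simp only: ring_distribs mult_1_left mult_ac)
    also have "cis t * cis (real n * t) = cis (real (n+1) * t)"
      by (simp only: cis_mult e) (simp add: add.commute)
    also have "complex_of_real R * complex_of_real (R^n) = complex_of_real (R^(n+1))"
      by (simp only: of_real_mult[symmetric] power_Suc Suc_eq_plus1[symmetric])
    finally have f: "v * (1+v)^n = complex_of_real (R^(n+1)) * cis (real (n+1) * t) - complex_of_real (R^n) * cis (real n * t)" .
    have "Im (v * (1+v)^n) = R^n * (R * sd - sa)"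
      unfolding f sa_ca_sb_cb_sd_def by (simp add: right_diff_distrib)
    also have "R * sd - sa = 0" using pos R_def by simp
    finally have real: "v * (1+v)^n \<in> \<real>" by (simp add: complex_is_Real_iff)
    have imv: "Im v = R * sb" using vR sa_ca_sb_cb_sd_def by simp
    have c2: "cmod (1+v) = R" unfolding w using R0 by (simp add: norm_mult)
    have "(cmod v)^2 = (R * cb - 1)^2 + (R * sb)^2"
      using vR sa_ca_sb_cb_sd_def by (simp add: cmod_power2)
    also have "... = (sb / sd)^2"
    proof -
      have "((R * cb - 1)^2 + (R * sb)^2) * sd^2 = (sa * cb - sd)^2 + (sa * sb)^2"
        using pos unfolding R_def by (simp add: field_simps power2_eq_square)
      also have "... = sb^2 * (sa^2 + ca^2)" unfolding sdeq
        by (simp add: algebra_simps power2_eq_square)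
      also have "sa^2 + ca^2 = 1" unfolding sa_ca_sb_cb_sd_def by simp
      finally have "((R * cb - 1)^2 + (R * sb)^2) * sd^2 = sb^2" by simp
      thus ?thesis using pos by (simp add: field_simps)
    qed
    finally have sq: "(cmod v)^2 = (sb / sd)^2" .
    have c1: "cmod v = sb / sd"
      using power2_eq_iff_nonneg[of "cmod v" "sb/sd"] pos sq by simp
    have "cmod v * cmod (1+v)^n = sin t * sin (real n * t) ^ n / sin (real (n+1) * t) ^ (n+1)"
      unfolding c1 c2 R_def sa_ca_sb_cb_sd_def by (simp add: power_divide del: of_nat_Suc)
    moreover have "real n ^ n / real (n+1) ^ (n+1) \<le> sin t * sin (real n * t) ^ n / sin (real (n+1) * t) ^ (n+1)"
      by (rule trig_K0[OF n t0 t(2)])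
    ultimately show ?thesis using real imv R0 pos by simp
  qed
qed

lemma amgm_aux:
  fixes z :: real and n :: nat
  assumes z: "z > 0" and n: "n \<ge> 1"
  shows "real n * z + 1 / z^n \<ge> real n + 1" and "z \<noteq> 1 \<Longrightarrow> real n * z + 1 / z^n > real n + 1"
proof -
  have b: "1 + real n * (1/z - 1) \<le> (1 + (1/z - 1))^n"
    by (rule Bernoulli_inequality) (use z in simp)
  hence b': "1 + real n * (1/z - 1) \<le> 1 / z^n" by (simp add: power_one_over)
  have zz: "z + 1/z - 2 = (z - 1)^2 / z" using z by (simp add: field_simps power2_eq_square)
  have "real n * z + 1 / z^n - (real n + 1) \<ge> real n * (z + 1/z - 2)"
    using b' by (simp add: algebra_simps)
  moreover have "real n * (z + 1/z - 2) \<ge> 0" unfolding zz using z by simp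
  ultimately show "real n * z + 1 / z^n \<ge> real n + 1" by linarith
  assume "z \<noteq> 1"
  hence "real n * (z + 1/z - 2) > 0" unfolding zz using z n by simp
  with \<open>real n * z + 1 / z^n - (real n + 1) \<ge> real n * (z + 1/z - 2)\<close>
  show "real n * z + 1 / z^n > real n + 1" by linarith
qed

lemma iden_aux:
  fixes A B AN BN X r :: real
  assumes "A > 0" "B = A + 1" "AN > 0" "BN > 0" "X > 0"
  shows "B * r^2 + B * A * (AN / (BN * B^2)) / X - A = A / B * (A * (B^2 * r^2 / A^2) + 1 / (BN * X / AN) - B)"
proof -
  have "B > 0" using assms by simp
  hence "B * r^2 + B * A * (AN / (BN * B^2)) / X - A = (B^3 * r^2 * BN * X + A * AN * B - A * B^2 * BN * X) / (B^2 * BN * X)"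
    using assms(1,3,4,5) \<open>B > 0\<close> by (simp add: field_simps power2_eq_square power3_eq_cube)
  also have "... = A / B * (A * (B^2 * r^2 / A^2) + 1 / (BN * X / AN) - B)"
    using assms(1,3,4,5) \<open>B > 0\<close> by (simp add: field_simps power2_eq_square power3_eq_cube)
  finally show ?thesis .
qed

lemma E_pos:
  fixes n :: nat and K r :: real
  assumes n: "n \<ge> 1" and K: "real n ^ n / real (n+1) ^ (n+1) \<le> K" and r: "r > 0"
  shows "real (n+1) * r^2 + real (n+1) * real n * K^2 / r^(2*n) - real n \<ge> 0"
    and "r \<noteq> real n / real (n+1) \<Longrightarrow> real (n+1) * r^2 + real (n+1) * real n * K^2 / r^(2*n) - real n > 0"
proof -
  define K0 where "K0 = real n ^ n / real (n+1) ^ (n+1)"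
  have K00: "K0 > 0" using n unfolding K0_def by simp
  have KK: "K0^2 \<le> K^2" using K K00 unfolding K0_def[symmetric] by (intro power_mono) auto
  define z where "z = (real (n+1) * r / real n)^2"
  have z0: "z > 0" using r n unfolding z_def by simp
  have np: "real n > 0" using n by simp
  have zn: "z^n = real (n+1)^(2*n) * r^(2*n) / real n^(2*n)"
    unfolding z_def by (simp add: power_mult[symmetric] power_mult_distrib power_divide mult.commute)
  have iden: "real (n+1) * r^2 + real (n+1) * real n * K0^2 / r^(2*n) - real n
      = real n / real (n+1) * (real n * z + 1 / z^n - (real n + 1))"
  proof -
    define AN BN X where "AN = real n ^ (2*n)" "BN = real (n+1) ^ (2*n)" "X = r^(2*n)"
    have pos: "AN > 0" "BN > 0" "X > 0" using np r unfolding AN_BN_X_def by auto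
    have K0sq: "K0^2 = AN / (BN * real (n+1)^2)"
    proof -
      have pw: "\<And>x::real. x^(2*n) = x^n * x^n" by (simp add: mult_2 power_add)
      show ?thesis unfolding K0_def AN_BN_X_def pw using np by (simp add: power2_eq_square field_simps)
    qed
    have zn': "z^n = BN * X / AN" unfolding zn AN_BN_X_def ..
    have zd: "z = real (n+1)^2 * r^2 / real n^2" unfolding z_def by (simp add: power_divide power_mult_distrib)
    have b: "real (n+1) = real n + 1" by simp
    have "real n + 1 = real (n+1)" by simp
    show ?thesis unfolding K0sq zn' AN_BN_X_def[symmetric] unfolding zd \<open>real n + 1 = real (n+1)\<close>
      by (rule iden_aux) (use pos np in auto)
  qed
  have mono: "real (n+1) * r^2 + real (n+1) * real n * K0^2 / r^(2*n) - real n
      \<le> real (n+1) * r^2 + real (n+1) * real n * K^2 / r^(2*n) - real n"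
    using KK r np by (simp add: divide_right_mono)
  have "real n / real (n+1) * (real n * z + 1 / z^n - (real n + 1)) \<ge> 0"
    using amgm_aux(1)[OF z0 n] by simp
  thus "real (n+1) * r^2 + real (n+1) * real n * K^2 / r^(2*n) - real n \<ge> 0"
    using iden mono by linarith
  assume rc: "r \<noteq> real n / real (n+1)"
  have "z \<noteq> 1"
  proof
    assume "z = 1"
    hence "(real (n+1) * r / real n)^2 = 1^2" unfolding z_def by simp
    hence "real (n+1) * r / real n = 1" using r np
      by (subst (asm) power2_eq_iff_nonneg) auto
    hence "r = real n / real (n+1)" using np by (simp add: field_simps)
    with rc show False by simp
  qed
  hence "real n / real (n+1) * (real n * z + 1 / z^n - (real n + 1)) > 0"
    using amgm_aux(2)[OF z0 n] np by simp
  thus "real (n+1) * r^2 + real (n+1) * real n * K^2 / r^(2*n) - real n > 0"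
    using iden mono by linarith
qed

lemma strict_mono_aux:
  fixes f f' :: "real \<Rightarrow> real" and a b c :: real
  assumes ab: "a < b" and der: "\<And>x. a \<le> x \<Longrightarrow> x \<le> b \<Longrightarrow> DERIV f x :> f' x"
    and pos: "\<And>x. a \<le> x \<Longrightarrow> x \<le> b \<Longrightarrow> x \<noteq> c \<Longrightarrow> f' x > 0"
  shows "f a < f b"
proof -
  have cont: "continuous_on {x..y} f" if "a \<le> x" "y \<le> b" for x y
  proof (rule DERIV_atLeastAtMost_imp_continuous_on)
    fix z assume "x \<le> z" "z \<le> y"
    thus "\<exists>w. DERIV f z :> w" using der[of z] that by auto
  qed
  have step: "f x < f y" if "a \<le> x" "x < y" "y \<le> b" "c \<notin> {x<..<y}" for x y
    apply (rule DERIV_pos_imp_increasing_open[OF that(2)])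
    using der pos that apply (metis greaterThanLessThan_iff less_eq_real_def order_less_le_trans order_le_less_trans)
    using cont that by simp
  show ?thesis
  proof (cases "c \<in> {a<..<b}")
    case True
    hence "f a < f c" "f c < f b" using step[of a c] step[of c b] ab by auto
    thus ?thesis by simp
  next
    case False
    thus ?thesis using step[of a b] ab by simp
  qed
qed

lemma psi_mono:
  fixes n :: nat and K s a b :: real
  assumes n: "n \<ge> 1" and s: "s > 0" and K: "real n ^ n / real (n+1) ^ (n+1) \<le> K"
    and a: "0 < a" "a < b"
    and Pa: "0 < (1+s)*a^2 + s*(1+s) - s*K^2/a^(2*n)"
  shows "(real (n+1)*(1+s) - 1)/2 * ln ((1+s)*a^2 + s*(1+s) - s*K^2/a^(2*n)) - real n * ln a
       < (real (n+1)*(1+s) - 1)/2 * ln ((1+s)*b^2 + s*(1+s) - s*K^2/b^(2*n)) - real n * ln b"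
proof -
  define P where "P r = (1+s)*r^2 + s*(1+s) - s*K^2/r^(2*n)" for r
  define A where "A = real (n+1)*(1+s) - 1"
  define D where "D r = 2*(1+s)*r + s*K^2*(2*real n)/(r^(2*n)*r)" for r
  have Pmono: "P x \<le> P y" if "0 < x" "x \<le> y" for x y
  proof -
    have "x^2 \<le> y^2" using that by (simp add: power_mono)
    moreover have "x^(2*n) \<le> y^(2*n)" using that by (simp add: power_mono)
    hence "K^2/y^(2*n) \<le> K^2/x^(2*n)" using that by (intro divide_left_mono) auto
    ultimately have "(1+s)*x^2 \<le> (1+s)*y^2" "s*(K^2/y^(2*n)) \<le> s*(K^2/x^(2*n))"
      using s by (intro mult_left_mono; simp)+
    thus ?thesis unfolding P_def by simp
  qed
  have Ppos: "P x > 0" if "a \<le> x" for x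
    using Pmono[of a x] a that Pa unfolding P_def by simp
  have derP: "DERIV P x :> D x" if "x > 0" for x
  proof -
    have "n > 0" using n by simp
    have e: "x^(2*n - 1) * x = x^(2*n)" using \<open>n > 0\<close> by (intro power_minus_mult) simp
    show ?thesis unfolding P_def D_def using that
      apply (auto intro!: derivative_eq_intros)
      apply (subst (1 2 3) e[symmetric, simplified])
      apply (simp add: field_simps)
      done
  qed
  define E where "E r = real (n+1) * r^2 + real (n+1) * real n * K^2 / r^(2*n) - real n" for r
  define Psi where "Psi r = A/2 * ln (P r) - real n * ln r" for r
  have derPsi: "DERIV Psi x :> A/2 * (D x / P x) - real n / x" if "a \<le> x" for x
  proof -
    have x0: "x > 0" using a that by simp
    show ?thesis unfolding Psi_def using x0 Ppos[OF that]
      by (auto intro!: derivative_eq_intros derP simp: field_simps)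
  qed
  have iden: "A/2 * (D x / P x) - real n / x = s*(1+s)*E x / (x * P x)" if "a \<le> x" for x
  proof -
    have x0: "x > 0" using a that by simp
    have P0: "P x > 0" using Ppos[OF that] .
    define X where "X = x^(2*n)"
    have X0: "X > 0" using x0 X_def by simp
    have Pd: "P x = (1+s)*x^2 + s*(1+s) - s*K^2/X" unfolding P_def X_def ..
    have "A/2 * (D x / P x) - real n / x = (A/2 * D x * x - real n * P x) / (x * P x)"
      using x0 P0 by (simp add: field_simps)
    also have "A/2 * D x * x - real n * P x = s*(1+s)*E x"
      unfolding Pd D_def E_def X_def[symmetric] A_def using X0 x0
      by (simp add: field_simps power2_eq_square)
    finally show ?thesis .
  qed
  have "Psi a < Psi b"
  proof (rule strict_mono_aux[OF a(2), of Psi _ "real n / real (n+1)"])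
    fix x assume "a \<le> x" "x \<le> b"
    thus "DERIV Psi x :> A/2 * (D x / P x) - real n / x" using derPsi by simp
  next
    fix x assume x: "a \<le> x" "x \<le> b" "x \<noteq> real n / real (n+1)"
    have x0: "x > 0" using a x by simp
    have "E x > 0" unfolding E_def by (rule E_pos(2)[OF n K x0 x(3)])
    moreover have "P x > 0" using Ppos x by simp
    ultimately show "A/2 * (D x / P x) - real n / x > 0"
      unfolding iden[OF x(1)] using s x0 by simp
  qed
  thus ?thesis unfolding Psi_def P_def A_def .
qed

lemma cx_facts:
  fixes x :: complex and n :: nat and K s :: real
  assumes n: "n \<ge> 1" and xK: "cmod x * cmod (1+x)^n = K" and K: "K > 0"
  shows "cmod (1+x) > 0" "cmod x = K / cmod (1+x)^n"
    "Re x = ((cmod (1+x))^2 - 1 - K^2/(cmod (1+x))^(2*n))/2"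
    "(cmod (complex_of_real (1+s) + x))^2 = (1+s)*(cmod (1+x))^2 + s*(1+s) - s*K^2/(cmod (1+x))^(2*n)"
proof -
  define r where "r = cmod (1+x)"
  have "r \<noteq> 0"
  proof
    assume "r = 0"
    hence "K = 0" using xK n unfolding r_def by (simp add: zero_power)
    with K show False by simp
  qed
  thus r0: "cmod (1+x) > 0" unfolding r_def by simp
  show cx: "cmod x = K / cmod (1+x)^n" using xK r0 by (simp add: field_simps)
  have cx2: "(cmod x)^2 = K^2 / r^(2*n)" unfolding cx r_def by (simp add: power_divide power_mult mult.commute)
  have r2: "r^2 = (1 + Re x)^2 + (Im x)^2" unfolding r_def by (simp add: cmod_power2)
  have x2: "(cmod x)^2 = (Re x)^2 + (Im x)^2" by (simp add: cmod_power2)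
  have rex: "Re x = (r^2 - 1 - (cmod x)^2)/2" unfolding r2 x2 by (simp add: power2_eq_square field_simps)
  show "Re x = ((cmod (1+x))^2 - 1 - K^2/(cmod (1+x))^(2*n))/2"
    using rex cx2 unfolding r_def by simp
  have "(cmod (complex_of_real (1+s) + x))^2 = (1 + s + Re x)^2 + (Im x)^2"
    by (simp add: cmod_power2)
  also have "... = (cmod x)^2 + 2*(1+s)*Re x + (1+s)^2" unfolding x2 by (simp add: power2_eq_square algebra_simps)
  also have "... = (1+s)*r^2 + s*(1+s) - s*(cmod x)^2" unfolding rex by (simp add: power2_eq_square field_simps)
  finally show "(cmod (complex_of_real (1+s) + x))^2 = (1+s)*(cmod (1+x))^2 + s*(1+s) - s*K^2/(cmod (1+x))^(2*n)"
    unfolding cx2 r_def by simp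
qed

theorem lemma5p6:
  fixes p :: real and d :: nat
  assumes "0 < p" and "p < 1" and "d \<ge> 2"
  shows "(\<forall>v\<in>gamma1 d. v * (1 + v) ^ (d - 1) \<in> \<real>) \<and>
         (\<forall>v\<in>gamma1 d. \<forall>u :: complex.
            u * (1 + u) ^ (d - 1) = v * (1 + v) ^ (d - 1) \<and> u \<noteq> v \<and> u \<noteq> cnj v \<longrightarrow>
            cmod u * cmod (complex_of_real (1 / p) + u) powr (real d / p - 1) \<noteq>
            cmod v * cmod (complex_of_real (1 / p) + v) powr (real d / p - 1))"
proof -
  define n where "n = d - 1"
  have n: "n \<ge> 1" and dn: "d = n + 1" using assms(3) unfolding n_def by auto
  define s where "s = 1/p - 1"
  have s: "s > 0" using assms(1,2) unfolding s_def by (simp add: field_simps)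
  have q: "1/p = 1 + s" unfolding s_def by simp
  define A where "A = real (n+1)*(1+s) - 1"
  have expA: "real d / p - 1 = A" unfolding A_def dn using q by (simp add: divide_inverse mult.commute)
  define K0 where "K0 = real n ^ n / real (n+1) ^ (n+1)"
  have K00: "K0 > 0" using n unfolding K0_def by simp
  have gf: "v * (1+v)^n \<in> \<real> \<and> Im v \<ge> 0 \<and> (Im v = 0 \<longrightarrow> v = - 1 / of_nat (n+1))
    \<and> K0 \<le> cmod v * cmod (1+v)^n" if "v \<in> gamma1 d" for v
    using gamma_facts[OF n] that unfolding dn K0_def by blast
  have part1: "\<forall>v\<in>gamma1 d. v * (1 + v) ^ (d - 1) \<in> \<real>"
    using gf unfolding n_def[symmetric] by blast
  have part2: "cmod u * cmod (complex_of_real (1+s) + u) powr A \<noteq>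
            cmod v * cmod (complex_of_real (1+s) + v) powr A"
    if v: "v \<in> gamma1 d" and f: "u * (1 + u) ^ n = v * (1 + v) ^ n" and uv: "u \<noteq> v" "u \<noteq> cnj v" for u v
  proof
    assume eq: "cmod u * cmod (complex_of_real (1+s) + u) powr A =
            cmod v * cmod (complex_of_real (1+s) + v) powr A"
    define K where "K = cmod v * cmod (1+v)^n"
    have KK0: "K0 \<le> K" using gf[OF v] unfolding K_def by blast
    have K0': "K > 0" using KK0 K00 by simp
    have Ku: "cmod u * cmod (1+u)^n = K" unfolding K_def
      using arg_cong[OF f, of cmod] by (simp add: norm_mult norm_power)
    have Kv: "cmod v * cmod (1+v)^n = K" unfolding K_def ..
    have A0: "A > 0" unfolding A_def using s by (simp add: algebra_simps add_pos_nonneg)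
    have cv0: "cmod v > 0"
    proof -
      have "cmod v \<noteq> 0"
      proof
        assume "cmod v = 0"
        hence "K = 0" using Kv by simp
        thus False using K0' by simp
      qed
      thus ?thesis by simp
    qed
    have qv0: "cmod (complex_of_real (1+s) + v) > 0"
    proof -
      have "complex_of_real (1+s) + v \<noteq> 0"
      proof
        assume h: "complex_of_real (1+s) + v = 0"
        hence "Im (complex_of_real (1+s) + v) = 0" by simp
        hence "Im v = 0" by simp
        hence "v = - 1 / of_nat (n+1)" using gf[OF v] by blast
        hence "complex_of_real (1+s) = 1 / of_nat (n+1)" using h by (simp add: add_eq_0_iff)
        hence "1 + s = 1 / real (n+1)"
          by (metis of_real_1 of_real_divide of_real_eq_iff of_real_of_nat_eq)
        moreover have "1 / real (n+1) \<le> 1" by simp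
        ultimately show False using s by linarith
      qed
      thus ?thesis by simp
    qed
    have Fv: "cmod v * cmod (complex_of_real (1+s) + v) powr A > 0"
      using cv0 qv0 by simp
    have qu0: "cmod (complex_of_real (1+s) + u) > 0"
    proof (rule ccontr)
      assume "\<not> ?thesis"
      hence "cmod (complex_of_real (1+s) + u) = 0" using norm_ge_zero[of "complex_of_real (1+s) + u"] by linarith
      hence "cmod u * cmod (complex_of_real (1+s) + u) powr A = 0" by simp
      with eq Fv show False by linarith
    qed
    have cu0: "cmod u > 0"
    proof -
      have "cmod u \<noteq> 0"
      proof
        assume "cmod u = 0"
        hence "K = 0" using Ku by simp
        thus False using K0' by simp
      qed
      thus ?thesis by simp
    qed
    define ru rv where "ru = cmod (1+u)" "rv = cmod (1+v)"
    define P where "P r = (1+s)*r^2 + s*(1+s) - s*K^2/r^(2*n)" for r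
    define Psi where "Psi r = A/2 * ln (P r) - real n * ln r" for r
    have lnF: "ln (cmod x * cmod (complex_of_real (1+s) + x) powr A) = ln K + Psi (cmod (1+x))"
      if xK: "cmod x * cmod (1+x)^n = K" and x0: "cmod (complex_of_real (1+s) + x) > 0" for x
    proof -
      note cf = cx_facts[OF n xK K0']
      note cf4 = cx_facts(4)[OF n xK K0', of s]
      define c where "c = cmod (complex_of_real (1+s) + x)"
      define r where "r = cmod (1+x)"
      have r0: "r > 0" unfolding r_def by (rule cf(1))
      have cxr: "cmod x = K / r^n" unfolding r_def by (rule cf(2))
      have c0: "c > 0" unfolding c_def by (rule x0)
      have l0: "ln (cmod x) = ln K - real n * ln r"
        unfolding cxr using K0' r0 by (simp add: ln_div ln_realpow)
      have "ln (P r) = ln (c^2)"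
        unfolding P_def c_def r_def cf4 ..
      also have "... = 2 * ln c" using c0 by (simp add: ln_realpow)
      finally have lc: "ln c = ln (P r) / 2" by simp
      have cx0: "cmod x > 0" unfolding cxr using K0' r0 by simp
      have l1: "ln (cmod x * c powr A) = ln (cmod x) + ln (c powr A)"
        using cx0 c0 by (intro ln_mult_pos) auto
      have l2: "ln (c powr A) = A * ln c" using c0 by (simp add: ln_powr)
      have "ln (cmod x * c powr A) = ln K + Psi r"
        unfolding l1 l2 l0 lc Psi_def by simp
      thus ?thesis unfolding c_def r_def .
    qed
    have "ln K + Psi ru = ln K + Psi rv"
      using lnF[OF Ku qu0] lnF[OF Kv qv0] eq unfolding ru_rv_def by simp
    hence PsiEq: "Psi ru = Psi rv" by simp
    have Pu: "P ru > 0"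
    proof -
      have "P ru = (cmod (complex_of_real (1+s) + u))^2"
        unfolding P_def ru_rv_def cx_facts(4)[OF n Ku K0', of s] ..
      thus ?thesis using qu0 by simp
    qed
    have Pv: "P rv > 0"
    proof -
      have "P rv = (cmod (complex_of_real (1+s) + v))^2"
        unfolding P_def ru_rv_def cx_facts(4)[OF n Kv K0', of s] ..
      thus ?thesis using qv0 by simp
    qed
    have ru0: "ru > 0" "rv > 0" unfolding ru_rv_def using cx_facts(1)[OF n Ku K0'] cx_facts(1)[OF n Kv K0'] by auto
    have req: "ru = rv"
    proof (rule ccontr)
      assume "ru \<noteq> rv"
      hence "ru < rv \<or> rv < ru" by linarith
      thus False
      proof
        assume "ru < rv"
        from psi_mono[OF n s KK0[unfolded K0_def] ru0(1) this] Pu PsiEq show False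
          unfolding Psi_def P_def A_def by simp
      next
        assume "rv < ru"
        from psi_mono[OF n s KK0[unfolded K0_def] ru0(2) this] Pv PsiEq show False
          unfolding Psi_def P_def A_def by simp
      qed
    qed
    have re: "Re u = Re v"
      using cx_facts(3)[OF n Ku K0'] cx_facts(3)[OF n Kv K0'] req unfolding ru_rv_def by simp
    have cm: "cmod u = cmod v"
      using cx_facts(2)[OF n Ku K0'] cx_facts(2)[OF n Kv K0'] req unfolding ru_rv_def by simp
    have "(Im u)^2 = (Im v)^2"
    proof -
      have "(Re u)^2 + (Im u)^2 = (Re v)^2 + (Im v)^2"
        using cm by (metis cmod_power2)
      thus ?thesis using re by simp
    qed
    hence "Im u = Im v \<or> Im u = - Im v" by (simp add: power2_eq_iff)
    thus False
    proof
      assume "Im u = Im v" thus False using re uv(1) by (simp add: complex_eq_iff)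
    next
      assume "Im u = - Im v" thus False using re uv(2) by (simp add: complex_eq_iff)
    qed
  qed
  show ?thesis
    using part1 part2 unfolding n_def[symmetric] q expA by blast
qed

end
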